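(* A topological space $X$ is $K^\theta$-compact if and only if it is w-compact.
   Context: $\mathsf{Top}$ is the category of topological spaces and continuous maps; $\mathsf{Tych}$ its full subcategory of Tychonoff spaces. For a space $X$, let $\mathbb I=[0,1]$, $\Phi_X:X\to\mathbb I^{C(X,\mathbb I)}$, $x\mapsto(f(x))_f$, and $\tau X=\Phi_X(X)$ (subspace topology); $\theta_X:X\to\tau X$ is the induced surjection, which is the reflection of $X$ into $\mathsf{Tych}$ (Tychonoff functor). Subobjects of a space are its subsets with the subspace topology. The closure operator $K^\theta$ on $\mathsf{Top}$ is defined by $K^\theta_X(S)=\theta_X^{-1}\big(\overline{\theta_X(S)}\big)$ for $S\subseteq X$, where the bar denotes topological closure in $\tau X$. A space $X$ is $K^\theta$-compact if for every space $Y$ and every subset $S\subseteq X\times Y$, $\pi_Y(K^\theta_{X\times Y}(S))=K^\theta_Y(\pi_Y(S))$, where $\pi_Y:X\times Y\to Y$ is the projection. A cozero-set of $X$ is a set $\{x: g(x)>0\}$ for some continuous $g:X\to\mathbb I$; a zero-set is $\{x: f(x)=0\}$ for continuous $f:X\to\mathbb I$. A subset is $\tau$-open if it is a union of cozero-sets. $X$ is w-compact (Ishii) if for every family $\{P_\lambda\}$ of $\tau$-open subsets of $X$ with the finite intersection property, $\bigcap_\lambda\overline{P_\lambda}\ne\emptyset$ (closures in $X$). *)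

theory Defs
  imports "HOL-Analysis.Analysis"
begin

definition unit_interval :: "real topology" where
  "unit_interval = top_of_set {0..1}"

definition CI :: "'a topology \<Rightarrow> ('a \<Rightarrow> real) set" where
  "CI X = {f. continuous_map X unit_interval f}"

text \<open>The evaluation map Phi_X : X -> I^(C(X,I)), x |-> (f x)_f, i.e. theta_X onto its image.\<close>
definition Phi :: "'a topology \<Rightarrow> 'a \<Rightarrow> (('a \<Rightarrow> real) \<Rightarrow> real)" where
  "Phi X x = (\<lambda>f\<in>CI X. f x)"

definition tauX :: "'a topology \<Rightarrow> (('a \<Rightarrow> real) \<Rightarrow> real) topology" where
  "tauX X = subtopology (product_topology (\<lambda>_. unit_interval) (CI X)) (Phi X ` topspace X)"

definition Ktheta :: "'a topology \<Rightarrow> 'a set \<Rightarrow> 'a set" where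
  "Ktheta X S = {x \<in> topspace X. Phi X x \<in> (tauX X) closure_of (Phi X ` S)}"

text \<open>K^theta-compactness, with the test spaces Y ranging over topologies on the type 'b
  (indicated by the type argument).\<close>
definition Ktheta_compact :: "'a topology \<Rightarrow> 'b itself \<Rightarrow> bool" where
  "Ktheta_compact X T \<longleftrightarrow>
     (\<forall>(Y::'b topology) S. S \<subseteq> topspace (prod_topology X Y) \<longrightarrow>
        snd ` (Ktheta (prod_topology X Y) S) = Ktheta Y (snd ` S))"

definition cozero_set :: "'a topology \<Rightarrow> 'a set \<Rightarrow> bool" where
  "cozero_set X C \<longleftrightarrow>
     (\<exists>g. continuous_map X unit_interval g \<and> C = {x \<in> topspace X. g x > 0})"

definition tau_open :: "'a topology \<Rightarrow> 'a set \<Rightarrow> bool" where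
  "tau_open X P \<longleftrightarrow> (\<exists>\<C>. (\<forall>C\<in>\<C>. cozero_set X C) \<and> P = \<Union>\<C>)"

definition finite_intersection_property :: "'a set set \<Rightarrow> bool" where
  "finite_intersection_property \<F> \<longleftrightarrow>
     (\<forall>\<G>. \<G> \<subseteq> \<F> \<and> finite \<G> \<and> \<G> \<noteq> {} \<longrightarrow> \<Inter>\<G> \<noteq> {})"

text \<open>w-compactness (Ishii); families are nonempty (indexed by some lambda).\<close>
definition w_compact :: "'a topology \<Rightarrow> bool" where
  "w_compact X \<longleftrightarrow>
     (\<forall>\<F>. \<F> \<noteq> {} \<and> (\<forall>P\<in>\<F>. tau_open X P) \<and> finite_intersection_property \<F> \<longrightarrow>
        (\<Inter>P\<in>\<F>. X closure_of P) \<noteq> {})"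

end

theory Submission
  imports Defs
begin

lemma CI_iff:
  "f \<in> CI X \<longleftrightarrow> continuous_map X euclideanreal f \<and> (\<forall>x\<in>topspace X. 0 \<le> f x \<and> f x \<le> 1)"
  unfolding CI_def unit_interval_def
  by (auto simp: continuous_map_in_subtopology image_subset_iff)

lemma CI_clamp:
  assumes "continuous_map X euclideanreal g"
  shows "(\<lambda>x. min 1 (max 0 (g x))) \<in> CI X"
  unfolding CI_iff using assms by (auto intro!: continuous_intros)

lemma CI_cont: "f \<in> CI X \<Longrightarrow> continuous_map X euclideanreal f"
  by (simp add: CI_iff)

lemma CI_range: "f \<in> CI X \<Longrightarrow> x \<in> topspace X \<Longrightarrow> 0 \<le> f x \<and> f x \<le> 1"
  by (simp add: CI_iff)

lemma cont_localI:
  assumes "\<And>x e. x \<in> topspace X \<Longrightarrow> e > 0 \<Longrightarrow>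
            \<exists>U. openin X U \<and> x \<in> U \<and> (\<forall>y\<in>U. \<bar>f y - f x\<bar> < e)"
  shows "continuous_map X euclideanreal f"
  unfolding continuous_map_def
proof (intro conjI allI impI)
  show "f \<in> topspace X \<rightarrow> topspace euclideanreal" by simp
  fix U :: "real set" assume "openin euclideanreal U"
  then have oU: "open U" by simp
  show "openin X {x \<in> topspace X. f x \<in> U}"
  proof (subst openin_subopen, intro ballI)
    fix x assume x: "x \<in> {x \<in> topspace X. f x \<in> U}"
    then obtain e where e: "e > 0" "\<And>y. \<bar>y - f x\<bar> < e \<Longrightarrow> y \<in> U"
      using oU unfolding open_real by blast
    obtain T where T: "openin X T" "x \<in> T" "\<forall>y\<in>T. \<bar>f y - f x\<bar> < e"
      using assms[of x e] x e by auto
    show "\<exists>T. openin X T \<and> x \<in> T \<and> T \<subseteq> {x \<in> topspace X. f x \<in> U}"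
      using T e openin_subset[OF T(1)] by (intro exI[of _ T]) auto
  qed
qed

lemma CI_prod_finite:
  assumes "finite I" "\<And>i. i \<in> I \<Longrightarrow> v i \<in> CI X \<and> v i q > 0"
  shows "\<exists>h\<in>CI X. h q > 0 \<and> (\<forall>u\<in>topspace X. h u > 0 \<longrightarrow> (\<forall>i\<in>I. v i u > 0))"
proof (intro bexI conjI ballI impI)
  let ?h = "\<lambda>u. \<Prod>i\<in>I. v i u"
  show "?h \<in> CI X"
    unfolding CI_iff using assms
    by (auto intro!: continuous_map_prod prod_nonneg prod_le_1 simp: CI_iff)
  show "?h q > 0" using assms by (auto intro!: prod_pos)
  fix u i assume u: "u \<in> topspace X" and h: "?h u > 0" and i: "i \<in> I"
  have "v i u \<ge> 0" using assms(2)[OF i] u by (simp add: CI_iff)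
  moreover have "v i u \<noteq> 0" using h i assms(1) by (metis less_irrefl prod_zero_iff)
  ultimately show "v i u > 0" by simp
qed


lemma tau_open_D:
  assumes "tau_open X P" "q \<in> P"
  shows "q \<in> topspace X \<and> (\<exists>h\<in>CI X. h q > 0 \<and> (\<forall>u\<in>topspace X. h u > 0 \<longrightarrow> u \<in> P))"
proof -
  from assms(1) obtain \<C> where C: "\<forall>C\<in>\<C>. cozero_set X C" "P = \<Union>\<C>"
    unfolding tau_open_def by blast
  then obtain C where CC: "C \<in> \<C>" "q \<in> C" using assms(2) by blast
  have "cozero_set X C" using C(1) CC(1) by blast
  then obtain g where g: "continuous_map X unit_interval g" "C = {x \<in> topspace X. g x > 0}"
    unfolding cozero_set_def by blast
  have CP: "C \<subseteq> P" using CC C(2) by blast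
  have "g \<in> CI X" using g(1) by (simp add: CI_def)
  moreover have "g q > 0" "q \<in> topspace X" using CC(2) g(2) by auto
  moreover have "\<forall>u\<in>topspace X. g u > 0 \<longrightarrow> u \<in> P" using g(2) CP by blast
  ultimately show ?thesis by blast
qed

lemma tau_open_subset: "tau_open X P \<Longrightarrow> P \<subseteq> topspace X"
proof
  fix q assume "tau_open X P" "q \<in> P"
  from tau_open_D[OF this] show "q \<in> topspace X" by (rule conjunct1)
qed

lemma tau_openI:
  assumes "P \<subseteq> topspace X"
    "\<And>q. q \<in> P \<Longrightarrow> \<exists>h\<in>CI X. h q > 0 \<and> (\<forall>u\<in>topspace X. h u > 0 \<longrightarrow> u \<in> P)"
  shows "tau_open X P"
proof -
  let ?C = "{C. cozero_set X C \<and> C \<subseteq> P}"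
  have "P \<subseteq> \<Union>?C"
  proof
    fix q assume q: "q \<in> P"
    then obtain h where h: "h \<in> CI X" "h q > 0" "\<forall>u\<in>topspace X. h u > 0 \<longrightarrow> u \<in> P"
      using assms(2) by blast
    let ?D = "{x \<in> topspace X. h x > 0}"
    have "cozero_set X ?D"
      using h(1) unfolding cozero_set_def CI_def by blast
    moreover have "?D \<subseteq> P" using h(3) by blast
    moreover have "q \<in> ?D" using h(2) q assms(1) by blast
    ultimately show "q \<in> \<Union>?C" by blast
  qed
  moreover have "\<Union>?C \<subseteq> P" by blast
  ultimately have "P = \<Union>?C" by (rule antisym)
  then show ?thesis unfolding tau_open_def by (intro exI[of _ ?C]) blast
qed


lemma topspace_unit_interval: "topspace unit_interval = {0..1}"
  by (simp add: unit_interval_def)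

lemma Phi_apply: "g \<in> CI X \<Longrightarrow> Phi X s g = g s"
  by (simp add: Phi_def)

lemma Phi_in_topspace:
  assumes "x \<in> topspace X"
  shows "Phi X x \<in> topspace (product_topology (\<lambda>_. unit_interval) (CI X))"
  using assms by (auto simp: Phi_def topspace_unit_interval CI_iff PiE_iff)

lemma topspace_tauX:
  "topspace (tauX X) = topspace (product_topology (\<lambda>_. unit_interval) (CI X)) \<inter> Phi X ` topspace X"
  by (simp add: tauX_def)

lemma Ktheta_char:
  assumes S: "S \<subseteq> topspace X"
  shows "x \<in> Ktheta X S \<longleftrightarrow> x \<in> topspace X \<and> (\<forall>g\<in>CI X. 0 < g x \<longrightarrow> (\<exists>s\<in>S. 0 < g s))"
proof
  let ?P = "product_topology (\<lambda>_. unit_interval) (CI X)"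
  assume x: "x \<in> Ktheta X S"
  then have xt: "x \<in> topspace X" and cl: "Phi X x \<in> tauX X closure_of (Phi X ` S)"
    by (auto simp: Ktheta_def)
  show "x \<in> topspace X \<and> (\<forall>g\<in>CI X. 0 < g x \<longrightarrow> (\<exists>s\<in>S. 0 < g s))"
  proof (intro conjI ballI impI xt)
    fix g assume g: "g \<in> CI X" "0 < g x"
    have c1: "continuous_map ?P unit_interval (\<lambda>p. p g)"
      using g(1) by (rule continuous_map_product_projection)
    have c2: "continuous_map ?P euclideanreal (\<lambda>p. p g)"
      using c1 unfolding unit_interval_def by (simp add: continuous_map_in_subtopology)
    let ?U' = "{p \<in> topspace ?P. p g \<in> {0<..}}"
    have oU': "openin ?P ?U'"
      by (rule openin_continuous_map_preimage[OF c2]) simp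
    have op: "openin (tauX X) (?U' \<inter> Phi X ` topspace X)"
      unfolding tauX_def openin_subtopology using oU' by blast
    have mem: "Phi X x \<in> ?U' \<inter> Phi X ` topspace X"
      using Phi_in_topspace[OF xt] xt g by (auto simp: Phi_apply)
    have clx: "\<forall>T. Phi X x \<in> T \<and> openin (tauX X) T \<longrightarrow> (\<exists>y. y \<in> Phi X ` S \<and> y \<in> T)"
      using cl unfolding in_closure_of by (rule conjunct2)
    have "\<exists>y. y \<in> Phi X ` S \<and> y \<in> ?U' \<inter> Phi X ` topspace X"
      using clx[rule_format, OF conjI[OF mem op]] .
    then obtain y where "y \<in> Phi X ` S" "y \<in> ?U' \<inter> Phi X ` topspace X"
      by blast
    then obtain s where "s \<in> S" "Phi X s g > 0" by auto
    then show "\<exists>s\<in>S. 0 < g s" using g(1) by (auto simp: Phi_apply)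
  qed
next
  let ?P = "product_topology (\<lambda>_. unit_interval) (CI X)"
  assume "x \<in> topspace X \<and> (\<forall>g\<in>CI X. 0 < g x \<longrightarrow> (\<exists>s\<in>S. 0 < g s))"
  then have xt: "x \<in> topspace X" and cond: "\<And>g. g \<in> CI X \<Longrightarrow> 0 < g x \<Longrightarrow> \<exists>s\<in>S. 0 < g s"
    by auto
  have "Phi X x \<in> tauX X closure_of (Phi X ` S)"
    unfolding in_closure_of
  proof (intro conjI allI impI)
    show "Phi X x \<in> topspace (tauX X)"
      using Phi_in_topspace[OF xt] xt by (simp add: topspace_tauX)
    fix T assume T: "Phi X x \<in> T \<and> openin (tauX X) T"
    then obtain T' where T': "openin ?P T'" "T = T' \<inter> Phi X ` topspace X"
      unfolding tauX_def openin_subtopology by blast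
    have "Phi X x \<in> T'" using T T' by blast
    then obtain U where U: "finite {i \<in> CI X. U i \<noteq> topspace unit_interval}"
        "\<forall>i\<in>CI X. openin unit_interval (U i)" "Phi X x \<in> Pi\<^sub>E (CI X) U" "Pi\<^sub>E (CI X) U \<subseteq> T'"
      using T'(1) unfolding openin_product_topology_alt by blast
    define K where "K = {i \<in> CI X. U i \<noteq> topspace unit_interval}"
    have fK: "finite K" using U(1) K_def by simp
    have "\<forall>i\<in>K. \<exists>e>0. \<forall>t\<in>{0..1}. \<bar>t - i x\<bar> < e \<longrightarrow> t \<in> U i"
    proof
      fix i assume i: "i \<in> K"
      then have iC: "i \<in> CI X" by (simp add: K_def)
      have "openin (top_of_set {0..1}) (U i)" using U(2) iC by (simp add: unit_interval_def)
      then obtain Op where Op: "open Op" "U i = Op \<inter> {0..1}"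
        unfolding openin_subtopology by auto
      have "i x \<in> U i" using U(3) iC by (auto simp: Phi_apply PiE_iff)
      then have "i x \<in> Op" using Op by blast
      then obtain e where "e > 0" "\<And>t. \<bar>t - i x\<bar> < e \<Longrightarrow> t \<in> Op"
        using Op(1) unfolding open_real by blast
      then show "\<exists>e>0. \<forall>t\<in>{0..1}. \<bar>t - i x\<bar> < e \<longrightarrow> t \<in> U i"
        using Op(2) by blast
    qed
    then obtain e where e: "\<And>i. i \<in> K \<Longrightarrow> e i > 0 \<and> (\<forall>t\<in>{0..1}. \<bar>t - i x\<bar> < e i \<longrightarrow> t \<in> U i)"
      by metis
    define d where "d = Min (insert 1 (e ` K))"
    have d0: "d > 0" unfolding d_def using fK e by (auto simp: Min_gr_iff)
    have d1: "d \<le> 1" unfolding d_def using fK by auto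
    have de: "\<And>i. i \<in> K \<Longrightarrow> d \<le> e i" unfolding d_def using fK by auto
    define g where "g = (\<lambda>u. max 0 (d - (\<Sum>i\<in>K. \<bar>i u - i x\<bar>)))"
    have KC: "K \<subseteq> CI X" by (auto simp: K_def)
    have gC: "g \<in> CI X"
      unfolding CI_iff
    proof
      show "continuous_map X euclideanreal g"
        unfolding g_def using KC fK
        by (intro continuous_map_real_max continuous_map_const[THEN iffD2] continuous_map_diff
              continuous_map_sum continuous_map_real_abs) (auto simp: CI_iff)
      show "\<forall>x\<in>topspace X. 0 \<le> g x \<and> g x \<le> 1"
      proof
        fix u assume "u \<in> topspace X"
        have h0: "0 \<le> (\<Sum>i\<in>K. \<bar>i u - i x\<bar>)" by (simp add: sum_nonneg)
        show "0 \<le> g u \<and> g u \<le> 1" unfolding g_def using d1 h0 by (smt (verit))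
      qed
    qed
    have "g x = d" unfolding g_def using d0 by simp
    then obtain s where s: "s \<in> S" "g s > 0" using cond[OF gC] d0 by auto
    have st: "s \<in> topspace X" using s S by blast
    have sum_lt: "(\<Sum>i\<in>K. \<bar>i s - i x\<bar>) < d" using s(2) unfolding g_def by linarith
    have "Phi X s \<in> Pi\<^sub>E (CI X) U"
    proof (unfold PiE_iff, intro conjI ballI)
      fix i assume iC: "i \<in> CI X"
      have isr: "i s \<in> {0..1}" using CI_range[OF iC st] by simp
      show "Phi X s i \<in> U i"
      proof (cases "i \<in> K")
        case True
        have "\<bar>i s - i x\<bar> \<le> (\<Sum>i\<in>K. \<bar>i s - i x\<bar>)"
          using True fK by (intro member_le_sum) auto
        then have "\<bar>i s - i x\<bar> < e i" using sum_lt de[OF True] by linarith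
        then show ?thesis using e[OF True] isr iC by (simp add: Phi_apply)
      next
        case False
        then have "U i = {0..1}" using iC by (simp add: K_def topspace_unit_interval)
        then show ?thesis using isr iC by (simp add: Phi_apply)
      qed
    next
      show "Phi X s \<in> extensional (CI X)" by (simp add: Phi_def)
    qed
    then have "Phi X s \<in> T" using U(4) T'(2) st by blast
    then show "\<exists>y. y \<in> Phi X ` S \<and> y \<in> T" using s(1) by blast
  qed
  then show "x \<in> Ktheta X S" using xt by (simp add: Ktheta_def)
qed




lemma section_cont:
  assumes gc: "continuous_map (prod_topology X Y) euclideanreal g" and y: "y \<in> topspace Y"
  shows "continuous_map X euclideanreal (\<lambda>u. g (u, y))"
proof -
  have "continuous_map X (prod_topology X Y) (\<lambda>u. (u, y))"
    using y by (intro continuous_map_pairedI) simp_all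
  from continuous_map_compose[OF this gc] show ?thesis by (simp add: o_def)
qed

lemma equicont:
  assumes wc: "w_compact X" and g: "g \<in> CI (prod_topology X Y)"
    and y1: "y1 \<in> topspace Y" and e: "e > 0"
  shows "\<exists>B. openin Y B \<and> y1 \<in> B \<and> (\<forall>y\<in>B. \<forall>u\<in>topspace X. \<bar>g (u, y) - g (u, y1)\<bar> < e)"
proof (rule ccontr)
  assume neg: "\<not> ?thesis"
  have neg': "\<exists>y\<in>B. \<exists>u\<in>topspace X. \<bar>g (u, y) - g (u, y1)\<bar> \<ge> e" if "openin Y B" "y1 \<in> B" for B
    using neg that by (meson not_less)
  define PB where "PB B = {u \<in> topspace X. \<exists>y\<in>B \<inter> topspace Y. \<bar>g (u, y) - g (u, y1)\<bar> > e/2}" for B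
  define F where "F = PB ` {B. openin Y B \<and> y1 \<in> B}"
  have gc: "continuous_map (prod_topology X Y) euclideanreal g" using g by (rule CI_cont)
  have Fne: "F \<noteq> {}" unfolding F_def using y1 by auto
  have Fopen: "\<forall>P\<in>F. tau_open X P"
  proof
    fix P assume "P \<in> F"
    then obtain B where B: "openin Y B" "y1 \<in> B" "P = PB B" unfolding F_def by blast
    show "tau_open X P"
    proof (rule tau_openI)
      show "P \<subseteq> topspace X" using B(3) PB_def by auto
      fix q assume "q \<in> P"
      then obtain y where y: "y \<in> B \<inter> topspace Y" "\<bar>g (q, y) - g (q, y1)\<bar> > e/2" and q: "q \<in> topspace X"
        using B(3) PB_def by auto
      let ?h = "\<lambda>u. min 1 (max 0 (\<bar>g (u, y) - g (u, y1)\<bar> - e/2))"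
      have "?h \<in> CI X"
        by (intro CI_clamp continuous_map_diff continuous_map_real_abs section_cont[OF gc] y1)
           (use y in auto)
      moreover have "?h q > 0" using y(2) by simp
      moreover have "\<forall>u\<in>topspace X. ?h u > 0 \<longrightarrow> u \<in> P"
      proof (intro ballI impI)
        fix u assume u: "u \<in> topspace X" "?h u > 0"
        then have "\<bar>g (u, y) - g (u, y1)\<bar> > e/2" by linarith
        then show "u \<in> P" using y(1) u(1) B(3) unfolding PB_def by blast
      qed
      ultimately show "\<exists>h\<in>CI X. h q > 0 \<and> (\<forall>u\<in>topspace X. h u > 0 \<longrightarrow> u \<in> P)"
        by (intro bexI[of _ ?h] conjI)
    qed
  qed
  have Ffip: "finite_intersection_property F"
    unfolding finite_intersection_property_def
  proof (intro allI impI)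
    fix G assume G: "G \<subseteq> F \<and> finite G \<and> G \<noteq> {}"
    have "\<forall>P\<in>G. \<exists>B. openin Y B \<and> y1 \<in> B \<and> P = PB B" using G unfolding F_def by blast
    from bchoice[OF this] obtain Bs where Bs0: "\<forall>P\<in>G. openin Y (Bs P) \<and> y1 \<in> Bs P \<and> P = PB (Bs P)"
      by blast
    then have Bs: "\<And>P. P \<in> G \<Longrightarrow> openin Y (Bs P) \<and> y1 \<in> Bs P \<and> P = PB (Bs P)"
      by blast
    let ?B = "\<Inter>(Bs ` G)"
    have oB: "openin Y ?B" using G Bs by (intro openin_Inter) auto
    have yB: "y1 \<in> ?B" using Bs by auto
    obtain y u where yu: "y \<in> ?B" "u \<in> topspace X" "\<bar>g (u, y) - g (u, y1)\<bar> \<ge> e"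
      using neg'[OF oB yB] by blast
    have yt: "y \<in> topspace Y" using openin_subset[OF oB] yu(1) by blast
    have "u \<in> P" if "P \<in> G" for P
    proof -
      have "y \<in> Bs P" using yu(1) that by blast
      moreover have "\<bar>g (u, y) - g (u, y1)\<bar> > e/2" using yu(3) e by linarith
      ultimately have "u \<in> PB (Bs P)" unfolding PB_def using yu(2) yt by blast
      then show ?thesis using Bs[OF that] by simp
    qed
    then show "\<Inter>G \<noteq> {}" by blast
  qed
  have "(\<Inter>P\<in>F. X closure_of P) \<noteq> {}"
    using wc[unfolded w_compact_def, rule_format, of F] Fne Fopen Ffip by blast
  then obtain xs where xs: "xs \<in> (\<Inter>P\<in>F. X closure_of P)"
    by blast
  obtain P0 where "P0 \<in> F" using Fne by blast
  then have "xs \<in> X closure_of P0" using xs by blast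
  then have xst: "xs \<in> topspace X"
    unfolding in_closure_of by (rule conjunct1)
  let ?k = "\<lambda>p. \<bar>g p - g (fst p, y1)\<bar>"
  have kc: "continuous_map (prod_topology X Y) euclideanreal ?k"
  proof -
    have "continuous_map (prod_topology X Y) (prod_topology X Y) (\<lambda>p. (fst p, y1))"
      using y1 by (intro continuous_map_pairedI continuous_map_fst) simp_all
    from continuous_map_compose[OF this gc] have "continuous_map (prod_topology X Y) euclideanreal (\<lambda>p. g (fst p, y1))"
      by (simp add: o_def)
    then show ?thesis by (intro continuous_map_real_abs continuous_map_diff gc)
  qed
  define O' where "O' = {p \<in> topspace (prod_topology X Y). ?k p \<in> {..<e/2}}"
  have oO: "openin (prod_topology X Y) O'"
    unfolding O'_def by (rule openin_continuous_map_preimage[OF kc]) simp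
  have mem: "(xs, y1) \<in> O'" using xst y1 e by (simp add: O'_def)
  have ex: "\<exists>U V. openin X U \<and> openin Y V \<and> xs \<in> U \<and> y1 \<in> V \<and> U \<times> V \<subseteq> O'"
    using oO[unfolded openin_prod_topology_alt, rule_format, OF mem] .
  then obtain A B where AB: "openin X A" "openin Y B" "xs \<in> A" "y1 \<in> B" "A \<times> B \<subseteq> O'"
    by blast
  have "PB B \<in> F" unfolding F_def using AB(2,4) by blast
  then have "xs \<in> X closure_of (PB B)" using xs by blast
  then have "\<forall>T. xs \<in> T \<and> openin X T \<longrightarrow> (\<exists>y. y \<in> PB B \<and> y \<in> T)"
    unfolding in_closure_of by (rule conjunct2)
  then obtain u where u: "u \<in> PB B" "u \<in> A" using AB(1,3) by blast
  then obtain y where y: "y \<in> B \<inter> topspace Y" "\<bar>g (u, y) - g (u, y1)\<bar> > e/2"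
    unfolding PB_def by blast
  have "(u, y) \<in> O'" using AB(5) u(2) y(1) by blast
  then show False using y(2) by (simp add: O'_def)
qed




lemma tube_fun:
  assumes wc: "w_compact X" and g: "g \<in> CI (prod_topology X Y)"
    and y0: "y0 \<in> topspace Y" and e: "e > 0"
  shows "\<exists>v\<in>CI Y. v y0 > 0 \<and> (\<forall>y\<in>topspace Y. v y > 0 \<longrightarrow> (\<forall>u\<in>topspace X. \<bar>g (u, y) - g (u, y0)\<bar> < e))"
proof (cases "topspace X = {}")
  case True
  have "(\<lambda>_. 1::real) \<in> CI Y" by (simp add: CI_iff)
  then show ?thesis using True by (intro bexI[of _ "\<lambda>_. 1"]) auto
next
  case False
  define d where "d y = (SUP u\<in>topspace X. \<bar>g (u, y) - g (u, y0)\<bar>)" for y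
  have rng: "0 \<le> g (u, y) \<and> g (u, y) \<le> 1" if "u \<in> topspace X" "y \<in> topspace Y" for u y
    using CI_range[OF g] that by simp
  have bdd: "bdd_above ((\<lambda>u. \<bar>g (u, y) - g (u, y0)\<bar>) ` topspace X)" if y: "y \<in> topspace Y" for y
  proof (rule bdd_aboveI2)
    fix u assume "u \<in> topspace X"
    then show "\<bar>g (u, y) - g (u, y0)\<bar> \<le> 1" using rng[of u y] rng[of u y0] y y0 by auto
  qed
  have le_d: "\<bar>g (u, y) - g (u, y0)\<bar> \<le> d y" if "y \<in> topspace Y" "u \<in> topspace X" for y u
    unfolding d_def using bdd[OF that(1)] that(2) by (rule cSUP_upper2) simp
  have d_le: "d y \<le> c" if "\<And>u. u \<in> topspace X \<Longrightarrow> \<bar>g (u, y) - g (u, y0)\<bar> \<le> c" for y c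
    unfolding d_def using False that by (intro cSUP_least) auto
  have dc: "continuous_map Y euclideanreal d"
  proof (rule cont_localI)
    fix y1 and \<epsilon> :: real assume y1: "y1 \<in> topspace Y" and ep: "\<epsilon> > 0"
    obtain B where B: "openin Y B" "y1 \<in> B" "\<forall>y\<in>B. \<forall>u\<in>topspace X. \<bar>g (u, y) - g (u, y1)\<bar> < \<epsilon>/2"
      using equicont[OF wc g y1, of "\<epsilon>/2"] ep by auto
    have "\<bar>d y - d y1\<bar> < \<epsilon>" if y: "y \<in> B" for y
    proof -
      have yt: "y \<in> topspace Y" using openin_subset[OF B(1)] y by blast
      have "d y \<le> d y1 + \<epsilon>/2"
      proof (rule d_le)
        fix u assume u: "u \<in> topspace X"
        have "\<bar>g (u, y) - g (u, y1)\<bar> < \<epsilon>/2" using B(3) y u by blast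
        moreover have "\<bar>g (u, y1) - g (u, y0)\<bar> \<le> d y1" using le_d[OF y1 u] .
        ultimately show "\<bar>g (u, y) - g (u, y0)\<bar> \<le> d y1 + \<epsilon>/2" by linarith
      qed
      moreover have "d y1 \<le> d y + \<epsilon>/2"
      proof (rule d_le)
        fix u assume u: "u \<in> topspace X"
        have "\<bar>g (u, y) - g (u, y1)\<bar> < \<epsilon>/2" using B(3) y u by blast
        moreover have "\<bar>g (u, y) - g (u, y0)\<bar> \<le> d y" using le_d[OF yt u] .
        ultimately show "\<bar>g (u, y1) - g (u, y0)\<bar> \<le> d y + \<epsilon>/2" by linarith
      qed
      ultimately show ?thesis using ep by linarith
    qed
    then show "\<exists>U. openin Y U \<and> y1 \<in> U \<and> (\<forall>y\<in>U. \<bar>d y - d y1\<bar> < \<epsilon>)"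
      using B(1,2) by blast
  qed
  have d0: "d y0 \<le> 0" by (rule d_le) simp
  define v where "v y = min 1 (max 0 (e - d y))" for y
  have vC: "v \<in> CI Y" unfolding v_def
    by (intro CI_clamp continuous_map_diff dc) simp
  have "v y0 > 0" unfolding v_def using d0 e by simp
  moreover have "\<forall>y\<in>topspace Y. v y > 0 \<longrightarrow> (\<forall>u\<in>topspace X. \<bar>g (u, y) - g (u, y0)\<bar> < e)"
  proof (intro ballI impI)
    fix y u assume y: "y \<in> topspace Y" and vy: "v y > 0" and u: "u \<in> topspace X"
    have "d y < e" using vy unfolding v_def by linarith
    then show "\<bar>g (u, y) - g (u, y0)\<bar> < e" using le_d[OF y u] by linarith
  qed
  ultimately show ?thesis using vC by (intro bexI[of _ v] conjI)
qed




lemma dir2: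
  assumes wc: "w_compact X"
  shows "Ktheta_compact X TYPE('b)"
  unfolding Ktheta_compact_def
proof (intro allI impI)
  fix Y :: "'b topology" and S assume S: "S \<subseteq> topspace (prod_topology X Y)"
  have sS: "snd ` S \<subseteq> topspace Y" using S by auto
  show "snd ` Ktheta (prod_topology X Y) S = Ktheta Y (snd ` S)"
  proof (intro equalityI subsetI)
    fix y assume "y \<in> snd ` Ktheta (prod_topology X Y) S"
    then obtain p where p: "p \<in> Ktheta (prod_topology X Y) S" "y = snd p" by blast
    then have pt: "p \<in> topspace (prod_topology X Y)"
      and c: "\<And>g. g \<in> CI (prod_topology X Y) \<Longrightarrow> 0 < g p \<Longrightarrow> \<exists>s\<in>S. 0 < g s"
      using Ktheta_char[OF S] by blast+
    have yt: "y \<in> topspace Y" using pt p(2) by auto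
    have "\<forall>g\<in>CI Y. 0 < g y \<longrightarrow> (\<exists>s\<in>snd ` S. 0 < g s)"
    proof (intro ballI impI)
      fix g assume g: "g \<in> CI Y" "0 < g y"
      have "(\<lambda>q. g (snd q)) \<in> CI (prod_topology X Y)"
        unfolding CI_iff
      proof
        show "continuous_map (prod_topology X Y) euclideanreal (\<lambda>q. g (snd q))"
          using continuous_map_compose[OF continuous_map_snd CI_cont[OF g(1)]] by (simp add: o_def)
        show "\<forall>x\<in>topspace (prod_topology X Y). 0 \<le> g (snd x) \<and> g (snd x) \<le> 1"
          using CI_range[OF g(1)] by auto
      qed
      from c[OF this] obtain s where "s \<in> S" "0 < g (snd s)" using g(2) p(2) by auto
      then show "\<exists>s\<in>snd ` S. 0 < g s" by blast
    qed
    then show "y \<in> Ktheta Y (snd ` S)" using Ktheta_char[OF sS] yt by blast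
  next
    fix y assume y: "y \<in> Ktheta Y (snd ` S)"
    then have yt: "y \<in> topspace Y" and cy: "\<And>v. v \<in> CI Y \<Longrightarrow> 0 < v y \<Longrightarrow> \<exists>s\<in>snd ` S. 0 < v s"
      using Ktheta_char[OF sS] by blast+
    show "y \<in> snd ` Ktheta (prod_topology X Y) S"
    proof (rule ccontr)
      assume nK: "y \<notin> snd ` Ktheta (prod_topology X Y) S"
      have "\<exists>g. g \<in> CI (prod_topology X Y) \<and> 0 < g (x, y) \<and> (\<forall>s\<in>S. \<not> 0 < g s)"
        if x: "x \<in> topspace X" for x
      proof -
        have "(x, y) \<notin> Ktheta (prod_topology X Y) S"
          using nK by (metis image_eqI snd_conv)
        then show ?thesis using Ktheta_char[OF S] x yt by auto
      qed
      then obtain G where G: "\<And>x. x \<in> topspace X \<Longrightarrow>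
          G x \<in> CI (prod_topology X Y) \<and> 0 < G x (x, y) \<and> (\<forall>s\<in>S. \<not> 0 < G x s)"
        by metis
      define c where "c x = G x (x, y)" for x
      define P where "P x = {u \<in> topspace X. G x (u, y) < c x / 2}" for x
      define F where "F = P ` topspace X"
      have Xne: "topspace X \<noteq> {}"
      proof
        assume X0: "topspace X = {}"
        have "(\<lambda>_. 1::real) \<in> CI Y" by (simp add: CI_iff)
        then obtain s where "s \<in> snd ` S" using cy by fastforce
        then show False using S X0 by auto
      qed
      have Fne: "F \<noteq> {}" using Xne F_def by simp
      have secG: "continuous_map X euclideanreal (\<lambda>u. G x (u, y))" if "x \<in> topspace X" for x
        using G[OF that] yt by (intro section_cont CI_cont) auto
      have Fopen: "\<forall>Q\<in>F. tau_open X Q"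
      proof
        fix Q assume "Q \<in> F"
        then obtain x where x: "x \<in> topspace X" "Q = P x" unfolding F_def by blast
        show "tau_open X Q"
        proof (rule tau_openI)
          show "Q \<subseteq> topspace X" using x P_def by auto
          fix q assume q: "q \<in> Q"
          let ?h = "\<lambda>u. min 1 (max 0 (c x / 2 - G x (u, y)))"
          have "?h \<in> CI X"
            by (intro CI_clamp continuous_map_diff secG x) simp
          moreover have "?h q > 0" using q x unfolding P_def by simp
          moreover have "\<forall>u\<in>topspace X. ?h u > 0 \<longrightarrow> u \<in> Q"
          proof (intro ballI impI)
            fix u assume u: "u \<in> topspace X" "?h u > 0"
            then have "G x (u, y) < c x / 2" by linarith
            then show "u \<in> Q" using u(1) x(2) unfolding P_def by blast
          qed
          ultimately show "\<exists>h\<in>CI X. h q > 0 \<and> (\<forall>u\<in>topspace X. h u > 0 \<longrightarrow> u \<in> Q)"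
            by (intro bexI[of _ ?h] conjI)
        qed
      qed
      have notcl: "x \<notin> X closure_of (P x)" if x: "x \<in> topspace X" for x
      proof
        assume xc: "x \<in> X closure_of (P x)"
        define A where "A = {u \<in> topspace X. G x (u, y) \<in> {c x / 2<..}}"
        have oA: "openin X A" unfolding A_def
          by (rule openin_continuous_map_preimage[OF secG[OF x]]) simp
        have xA: "x \<in> A" using G[OF x] x unfolding A_def c_def by simp
        have "\<forall>T. x \<in> T \<and> openin X T \<longrightarrow> (\<exists>z. z \<in> P x \<and> z \<in> T)"
          using xc unfolding in_closure_of by (rule conjunct2)
        then obtain z where "z \<in> P x" "z \<in> A" using oA xA by blast
        then show False unfolding P_def A_def by auto
      qed
      have empty: "(\<Inter>Q\<in>F. X closure_of Q) = {}"
      proof (rule ccontr)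
        assume "(\<Inter>Q\<in>F. X closure_of Q) \<noteq> {}"
        then obtain z where z: "z \<in> (\<Inter>Q\<in>F. X closure_of Q)" by blast
        obtain Q0 where "Q0 \<in> F" using Fne by blast
        then have "z \<in> X closure_of Q0" using z by blast
        then have zt: "z \<in> topspace X" unfolding in_closure_of by (rule conjunct1)
        have "P z \<in> F" using zt F_def by blast
        then have "z \<in> X closure_of (P z)" using z by blast
        then show False using notcl[OF zt] by blast
      qed
      have "\<not> finite_intersection_property F"
        using wc[unfolded w_compact_def, rule_format, of F] Fne Fopen empty by blast
      then obtain G' where G': "G' \<subseteq> F" "finite G'" "G' \<noteq> {}" "\<Inter>G' = {}"
        unfolding finite_intersection_property_def by blast
      have "\<forall>Q\<in>G'. \<exists>x. x \<in> topspace X \<and> Q = P x" using G'(1) F_def by blast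
      from bchoice[OF this] obtain xq where xq: "\<forall>Q\<in>G'. xq Q \<in> topspace X \<and> Q = P (xq Q)"
        by blast
      define I where "I = xq ` G'"
      have fI: "finite I" using G'(2) I_def by simp
      have It: "I \<subseteq> topspace X" using xq I_def by blast
      have "\<forall>x\<in>I. \<exists>v. v \<in> CI Y \<and> v y > 0 \<and> (\<forall>y'\<in>topspace Y. v y' > 0 \<longrightarrow>
              (\<forall>u\<in>topspace X. \<bar>G x (u, y') - G x (u, y)\<bar> < c x / 4))"
      proof
        fix x assume "x \<in> I"
        then have x: "x \<in> topspace X" using It by blast
        have "c x / 4 > 0" using G[OF x] c_def by simp
        from tube_fun[OF wc _ yt this, of "G x"] G[OF x]
        show "\<exists>v. v \<in> CI Y \<and> v y > 0 \<and> (\<forall>y'\<in>topspace Y. v y' > 0 \<longrightarrow>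
              (\<forall>u\<in>topspace X. \<bar>G x (u, y') - G x (u, y)\<bar> < c x / 4))"
          by blast
      qed
      from bchoice[OF this] obtain V where V: "\<forall>x\<in>I. V x \<in> CI Y \<and> V x y > 0 \<and> (\<forall>y'\<in>topspace Y. V x y' > 0 \<longrightarrow>
              (\<forall>u\<in>topspace X. \<bar>G x (u, y') - G x (u, y)\<bar> < c x / 4))"
        by blast
      obtain h where h: "h \<in> CI Y" "h y > 0" "\<forall>y'\<in>topspace Y. h y' > 0 \<longrightarrow> (\<forall>x\<in>I. V x y' > 0)"
        using CI_prod_finite[OF fI, of V Y y] V by blast
      obtain y' where y': "y' \<in> snd ` S" "h y' > 0" using cy[OF h(1,2)] by blast
      then obtain u where us: "(u, y') \<in> S" by force
      have ut: "u \<in> topspace X" and y't: "y' \<in> topspace Y" using us S by auto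
      have "u \<notin> \<Inter>G'" using G'(4) by blast
      then obtain Q where Q: "Q \<in> G'" "u \<notin> Q" by blast
      define x where "x = xq Q"
      have xI: "x \<in> I" using Q(1) x_def I_def by blast
      have xt: "x \<in> topspace X" and QP: "Q = P x" using xq Q(1) x_def by auto
      have "\<not> G x (u, y) < c x / 2" using Q(2) QP ut unfolding P_def by blast
      moreover have "V x y' > 0" using h(3) y't y'(2) xI by blast
      then have "\<bar>G x (u, y') - G x (u, y)\<bar> < c x / 4" using V xI y't ut by blast
      moreover have "c x > 0" using G[OF xt] c_def by simp
      ultimately have "G x (u, y') > 0" by linarith
      then show False using G[OF xt] us by blast
    qed
  qed
qed




definition validM :: "'a topology \<Rightarrow> 'a set set \<Rightarrow> bool" where
  "validM X M \<longleftrightarrow> (\<exists>f\<in>CI X. (\<forall>z\<in>topspace X \<inter> \<Inter>M. f z = 0) \<and> (\<forall>u\<in>topspace X - \<Union>M. f u = 1))"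

definition fM :: "'a topology \<Rightarrow> 'a set set \<Rightarrow> 'a \<Rightarrow> real" where
  "fM X M = (SOME f. f \<in> CI X \<and> (\<forall>z\<in>topspace X \<inter> \<Inter>M. f z = 0) \<and> (\<forall>u\<in>topspace X - \<Union>M. f u = 1))"

lemma fM_prop:
  assumes "validM X M"
  shows "fM X M \<in> CI X \<and> (\<forall>z\<in>topspace X \<inter> \<Inter>M. fM X M z = 0) \<and> (\<forall>u\<in>topspace X - \<Union>M. fM X M u = 1)"
proof -
  have "\<exists>f. f \<in> CI X \<and> (\<forall>z\<in>topspace X \<inter> \<Inter>M. f z = 0) \<and> (\<forall>u\<in>topspace X - \<Union>M. f u = 1)"
    using assms unfolding validM_def by blast
  then show ?thesis unfolding fM_def by (rule someI_ex)
qed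

definition Ypts :: "'a topology \<Rightarrow> 'a set set option set" where
  "Ypts X = insert None (Some ` Collect (validM X))"

definition Yopen :: "'a topology \<Rightarrow> 'a set set \<Rightarrow> 'a set set option set \<Rightarrow> bool" where
  "Yopen X F U \<longleftrightarrow> U \<subseteq> Ypts X \<and>
     (None \<in> U \<longrightarrow> (\<exists>G. finite G \<and> G \<subseteq> F \<and> Some ` {M. validM X M \<and> \<Union>M \<subseteq> \<Inter>G} \<subseteq> U))"

lemma Yopen_None:
  assumes "Yopen X F U" "None \<in> U"
  obtains G where "finite G" "G \<subseteq> F" "Some ` {M. validM X M \<and> \<Union>M \<subseteq> \<Inter>G} \<subseteq> U"
  using assms unfolding Yopen_def by blast

lemma Yopen_sub: "Yopen X F U \<Longrightarrow> U \<subseteq> Ypts X"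
  unfolding Yopen_def by (rule conjunct1)

lemma YopenI:
  assumes "U \<subseteq> Ypts X" "None \<in> U \<Longrightarrow> \<exists>G. finite G \<and> G \<subseteq> F \<and> Some ` {M. validM X M \<and> \<Union>M \<subseteq> \<Inter>G} \<subseteq> U"
  shows "Yopen X F U"
  unfolding Yopen_def using assms by blast

lemma istopology_Yopen: "istopology (Yopen X F)"
  unfolding istopology_def
proof (intro conjI allI impI)
  fix S T assume S: "Yopen X F S" and T: "Yopen X F T"
  show "Yopen X F (S \<inter> T)"
  proof (rule YopenI)
    show "S \<inter> T \<subseteq> Ypts X" using Yopen_sub[OF S] by blast
    assume N: "None \<in> S \<inter> T"
    obtain G1 where G1: "finite G1" "G1 \<subseteq> F" "Some ` {M. validM X M \<and> \<Union>M \<subseteq> \<Inter>G1} \<subseteq> S"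
      using that by (rule Yopen_None[OF S IntD1[OF N]])
    obtain G2 where G2: "finite G2" "G2 \<subseteq> F" "Some ` {M. validM X M \<and> \<Union>M \<subseteq> \<Inter>G2} \<subseteq> T"
      using that by (rule Yopen_None[OF T IntD2[OF N]])
    have "Some M \<in> S \<inter> T" if "validM X M" "\<Union>M \<subseteq> \<Inter>(G1 \<union> G2)" for M
    proof -
      have "\<Union>M \<subseteq> \<Inter>G1" "\<Union>M \<subseteq> \<Inter>G2" using that(2) by auto
      then have "Some M \<in> Some ` {M. validM X M \<and> \<Union>M \<subseteq> \<Inter>G1}"
        "Some M \<in> Some ` {M. validM X M \<and> \<Union>M \<subseteq> \<Inter>G2}"
        using that(1) by (auto intro!: imageI)
      then show ?thesis using G1(3) G2(3) by (meson IntI subsetD)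
    qed
    then have "Some ` {M. validM X M \<and> \<Union>M \<subseteq> \<Inter>(G1 \<union> G2)} \<subseteq> S \<inter> T"
      by (auto simp del: Int_iff)
    moreover have "finite (G1 \<union> G2)" "G1 \<union> G2 \<subseteq> F" using G1 G2 by auto
    ultimately show "\<exists>G. finite G \<and> G \<subseteq> F \<and> Some ` {M. validM X M \<and> \<Union>M \<subseteq> \<Inter>G} \<subseteq> S \<inter> T"
      by (intro exI[of _ "G1 \<union> G2"] conjI)
  qed
next
  fix K assume K: "\<forall>S\<in>K. Yopen X F S"
  show "Yopen X F (\<Union>K)"
  proof (rule YopenI)
    show "\<Union>K \<subseteq> Ypts X" using K Yopen_sub by (meson Union_least)
    assume "None \<in> \<Union>K"
    then obtain S where S: "S \<in> K" "None \<in> S" by (rule UnionE)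
    obtain G where G: "finite G" "G \<subseteq> F" "Some ` {M. validM X M \<and> \<Union>M \<subseteq> \<Inter>G} \<subseteq> S"
      using that by (rule Yopen_None[OF bspec[OF K S(1)] S(2)])
    have "S \<subseteq> \<Union>K" using S(1) by (rule Union_upper)
    then show "\<exists>G. finite G \<and> G \<subseteq> F \<and> Some ` {M. validM X M \<and> \<Union>M \<subseteq> \<Inter>G} \<subseteq> \<Union>K"
      using G by (intro exI[of _ G] conjI) (auto simp del: Union_iff)
  qed
qed

definition YT :: "'a topology \<Rightarrow> 'a set set \<Rightarrow> 'a set set option topology" where
  "YT X F = topology (Yopen X F)"

lemma openin_YT: "openin (YT X F) = Yopen X F"
  unfolding YT_def by (rule topology_inverse'[OF istopology_Yopen])

lemma topspace_YT: "topspace (YT X F) = Ypts X"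
proof -
  have "Yopen X F (Ypts X)" unfolding Yopen_def Ypts_def
    by (intro conjI impI exI[of _ "{}"]) auto
  moreover have "\<And>U. Yopen X F U \<Longrightarrow> U \<subseteq> Ypts X" unfolding Yopen_def by blast
  ultimately have "\<Union>{U. Yopen X F U} = Ypts X"
    by (intro equalityI Union_least Union_upper) (auto simp del: Union_iff)
  then show ?thesis unfolding topspace_def openin_YT by simp
qed




lemma dir1_A:
  assumes F: "F \<noteq> {}" "\<forall>P\<in>F. tau_open X P" "finite_intersection_property F"
    and S0: "S0 = {(z, Some M) | z M. validM X M \<and> z \<in> topspace X \<and> z \<in> \<Inter>M}"
  shows "None \<in> Ktheta (YT X F) (snd ` S0)"
proof -
  have sS: "snd ` S0 \<subseteq> topspace (YT X F)"
    unfolding S0 topspace_YT Ypts_def by auto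
  have "\<exists>s\<in>snd ` S0. 0 < v s" if v: "v \<in> CI (YT X F)" "0 < v None" for v
  proof -
    define Op where "Op = {p \<in> topspace (YT X F). v p \<in> {0<..}}"
    have "openin (YT X F) Op" unfolding Op_def
      by (rule openin_continuous_map_preimage[OF CI_cont[OF v(1)]]) simp
    then have oY: "Yopen X F Op" by (simp add: openin_YT)
    have NO: "None \<in> Op" unfolding Op_def topspace_YT Ypts_def using v(2) by simp
    obtain G where G: "finite G" "G \<subseteq> F" "Some ` {M. validM X M \<and> \<Union>M \<subseteq> \<Inter>G} \<subseteq> Op"
      using that by (rule Yopen_None[OF oY NO])
    obtain P0 where P0: "P0 \<in> F" using F(1) by blast
    define G' where "G' = insert P0 G"
    have G'F: "G' \<subseteq> F" "finite G'" "G' \<noteq> {}" using G P0 G'_def by auto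
    then have "\<Inter>G' \<noteq> {}" using F(3) unfolding finite_intersection_property_def by blast
    then obtain q where q: "q \<in> \<Inter>G'" by blast
    have qt: "q \<in> topspace X" using tau_open_D[of X P0 q] F(2) P0 q G'_def by blast
    have "\<forall>P\<in>G'. \<exists>h. h \<in> CI X \<and> h q > 0 \<and> (\<forall>u\<in>topspace X. h u > 0 \<longrightarrow> u \<in> P)"
    proof
      fix P assume P: "P \<in> G'"
      then have "tau_open X P" "q \<in> P" using F(2) G'F(1) q by blast+
      from tau_open_D[OF this] show "\<exists>h. h \<in> CI X \<and> h q > 0 \<and> (\<forall>u\<in>topspace X. h u > 0 \<longrightarrow> u \<in> P)"
        by blast
    qed
    from bchoice[OF this] obtain H where H: "\<forall>P\<in>G'. H P \<in> CI X \<and> H P q > 0 \<and> (\<forall>u\<in>topspace X. H P u > 0 \<longrightarrow> u \<in> P)"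
      by blast
    obtain h where h: "h \<in> CI X" "h q > 0" "\<forall>u\<in>topspace X. h u > 0 \<longrightarrow> (\<forall>P\<in>G'. H P u > 0)"
      using CI_prod_finite[OF G'F(2), of H X q] H by blast
    have hP: "u \<in> \<Inter>G'" if "u \<in> topspace X" "h u > 0" for u
      using h(3) H that by blast
    define Z where "Z = {u \<in> topspace X. h q \<le> h u}"
    define C where "C = {u \<in> topspace X. 0 < h u}"
    define M where "M = {Z, C}"
    have ZC: "Z \<subseteq> C" using h(2) unfolding Z_def C_def by auto
    have IM: "\<Inter>M = Z" using ZC M_def by auto
    have UM: "\<Union>M = C" using ZC M_def by auto
    define f where "f u = 1 - min 1 (h u * (1 / h q))" for u
    have fC: "f \<in> CI X" unfolding CI_iff
    proof
      show "continuous_map X euclideanreal f" unfolding f_def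
        by (intro continuous_map_diff continuous_map_real_min continuous_map_real_mult_right CI_cont[OF h(1)]) simp_all
      show "\<forall>x\<in>topspace X. 0 \<le> f x \<and> f x \<le> 1"
      proof
        fix x assume x: "x \<in> topspace X"
        have "0 \<le> h x" using CI_range[OF h(1) x] by simp
        then have "0 \<le> h x * (1 / h q)" using h(2) by simp
        then show "0 \<le> f x \<and> f x \<le> 1" unfolding f_def by linarith
      qed
    qed
    have valid: "validM X M" unfolding validM_def
    proof (intro bexI[of _ f] conjI ballI fC)
      fix z assume "z \<in> topspace X \<inter> \<Inter>M"
      then have "h q \<le> h z" using IM Z_def by auto
      then have "1 \<le> h z * (1 / h q)" using h(2) by (simp add: field_simps)
      then show "f z = 0" unfolding f_def by simp
    next
      fix u assume u: "u \<in> topspace X - \<Union>M"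
      then have "\<not> 0 < h u" using UM C_def by auto
      moreover have "0 \<le> h u" using CI_range[OF h(1)] u by auto
      ultimately have "h u = 0" by simp
      then show "f u = 1" unfolding f_def by simp
    qed
    have "\<Union>M \<subseteq> \<Inter>G"
    proof
      fix u assume "u \<in> \<Union>M"
      then have "u \<in> C" using UM by simp
      then have "u \<in> \<Inter>G'" using hP C_def by blast
      then show "u \<in> \<Inter>G" using G'_def by blast
    qed
    then have "Some M \<in> Some ` {M. validM X M \<and> \<Union>M \<subseteq> \<Inter>G}" using valid by blast
    then have "Some M \<in> Op" using G(3) by (rule subsetD[rotated])
    then have vM: "0 < v (Some M)" unfolding Op_def by simp
    have "q \<in> \<Inter>M" using IM Z_def qt by simp
    then have "(q, Some M) \<in> S0" unfolding S0 using valid qt by blast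
    then have "Some M \<in> snd ` S0" by (metis image_eqI snd_conv)
    then show ?thesis using vM by blast
  qed
  moreover have "None \<in> topspace (YT X F)" by (simp add: topspace_YT Ypts_def)
  ultimately show ?thesis using Ktheta_char[OF sS] by blast
qed




lemma dir1_B:
  assumes empty: "(\<Inter>P\<in>F. X closure_of P) = {}"
    and S0: "S0 = {(z, Some M) | z M. validM X M \<and> z \<in> topspace X \<and> z \<in> \<Inter>M}"
  shows "(x, None) \<notin> Ktheta (prod_topology X (YT X F)) S0"
proof
  let ?Y = "YT X F"
  have sS: "S0 \<subseteq> topspace (prod_topology X ?Y)"
    unfolding S0 by (auto simp: topspace_YT Ypts_def)
  assume "(x, None) \<in> Ktheta (prod_topology X ?Y) S0"
  then have c: "\<And>g. g \<in> CI (prod_topology X ?Y) \<Longrightarrow> 0 < g (x, None) \<Longrightarrow> \<exists>s\<in>S0. 0 < g s"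
    using Ktheta_char[OF sS] by blast
  define w where "w p = (case snd p of None \<Rightarrow> 1 | Some M \<Rightarrow> fM X M (fst p))" for p
  have validY: "validM X M" if "Some M \<in> topspace ?Y" for M
    using that unfolding topspace_YT Ypts_def by auto
  have wC: "w \<in> CI (prod_topology X ?Y)" unfolding CI_iff
  proof
    show "\<forall>p\<in>topspace (prod_topology X ?Y). 0 \<le> w p \<and> w p \<le> 1"
    proof
      fix p assume p: "p \<in> topspace (prod_topology X ?Y)"
      show "0 \<le> w p \<and> w p \<le> 1"
      proof (cases "snd p")
        case None then show ?thesis by (simp add: w_def)
      next
        case (Some M)
        then have "validM X M" using p validY by (metis mem_Times_iff topspace_prod_topology)
        then have "fM X M \<in> CI X" using fM_prop by blast
        moreover have "fst p \<in> topspace X" using p by auto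
        ultimately show ?thesis using Some CI_range by (simp add: w_def)
      qed
    qed
    show "continuous_map (prod_topology X ?Y) euclideanreal w"
    proof (rule cont_localI)
      fix p and e :: real assume p: "p \<in> topspace (prod_topology X ?Y)" and e: "e > 0"
      obtain u q where pq: "p = (u, q)" by fastforce
      have ut: "u \<in> topspace X" and qt: "q \<in> topspace ?Y" using p pq by auto
      show "\<exists>U. openin (prod_topology X ?Y) U \<and> p \<in> U \<and> (\<forall>y\<in>U. \<bar>w y - w p\<bar> < e)"
      proof (cases q)
        case None
        have "u \<notin> (\<Inter>P\<in>F. X closure_of P)" using empty by blast
        then obtain P where P: "P \<in> F" "u \<notin> X closure_of P" by blast
        then have "\<not> (\<forall>T. u \<in> T \<and> openin X T \<longrightarrow> (\<exists>y. y \<in> P \<and> y \<in> T))"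
          using ut unfolding in_closure_of by blast
        then obtain A where A: "u \<in> A" "openin X A" "\<And>y. y \<in> A \<Longrightarrow> y \<notin> P" by blast
        define N where "N = insert None (Some ` {M. validM X M \<and> \<Union>M \<subseteq> P})"
        have "Yopen X F N"
        proof (rule YopenI)
          show "N \<subseteq> Ypts X" unfolding N_def Ypts_def by (intro insert_mono image_mono) auto
          have "Some ` {M. validM X M \<and> \<Union>M \<subseteq> \<Inter>{P}} \<subseteq> N" unfolding N_def by auto
          then show "\<exists>G. finite G \<and> G \<subseteq> F \<and> Some ` {M. validM X M \<and> \<Union>M \<subseteq> \<Inter>G} \<subseteq> N"
            using P(1) by (intro exI[of _ "{P}"]) auto
        qed
        then have oN: "openin ?Y N" by (simp add: openin_YT)
        have oU: "openin (prod_topology X ?Y) (A \<times> N)"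
          using A(2) oN by (simp add: openin_prod_Times_iff)
        have pU: "p \<in> A \<times> N" using pq None A(1) N_def by simp
        have "w y = 1" if y: "y \<in> A \<times> N" for y
        proof -
          obtain a n where an: "y = (a, n)" "a \<in> A" "n \<in> N" using y by blast
          show ?thesis
          proof (cases n)
            case None then show ?thesis using an by (simp add: w_def)
          next
            case (Some M)
            then have M: "validM X M" "\<Union>M \<subseteq> P" using an(3) N_def by auto
            have "a \<in> topspace X" using openin_subset[OF A(2)] an(2) by blast
            moreover have "a \<notin> \<Union>M" using A(3)[OF an(2)] M(2) by blast
            ultimately have "fM X M a = 1" using fM_prop[OF M(1)] by blast
            then show ?thesis using an Some by (simp add: w_def)
          qed
        qed
        moreover have "w p = 1" using pq None by (simp add: w_def)
        ultimately show ?thesis using oU pU e by (intro exI[of _ "A \<times> N"]) auto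
      next
        case (Some M)
        have vM: "validM X M" using qt Some validY by simp
        have fc: "continuous_map X euclideanreal (fM X M)" using fM_prop[OF vM] CI_cont by blast
        define A where "A = {a \<in> topspace X. fM X M a \<in> {fM X M u - e <..< fM X M u + e}}"
        have oA: "openin X A" unfolding A_def
          by (rule openin_continuous_map_preimage[OF fc]) simp
        have "Yopen X F {Some M}"
          by (rule YopenI) (use vM in \<open>auto simp: Ypts_def\<close>)
        then have oS: "openin ?Y {Some M}" by (simp add: openin_YT)
        have oU: "openin (prod_topology X ?Y) (A \<times> {Some M})"
          using oA oS by (simp add: openin_prod_Times_iff)
        have pU: "p \<in> A \<times> {Some M}" using pq Some ut e unfolding A_def by simp
        have "\<bar>w y - w p\<bar> < e" if y: "y \<in> A \<times> {Some M}" for y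
        proof -
          obtain a where a: "y = (a, Some M)" "a \<in> A" using y by blast
          then have "\<bar>fM X M a - fM X M u\<bar> < e" unfolding A_def by auto
          then show ?thesis using a pq Some by (simp add: w_def)
        qed
        then show ?thesis using oU pU by blast
      qed
    qed
  qed
  have "w (x, None) = 1" by (simp add: w_def)
  then obtain s where s: "s \<in> S0" "0 < w s" using c[OF wC] by auto
  then obtain z M where zM: "s = (z, Some M)" "validM X M" "z \<in> topspace X" "z \<in> \<Inter>M"
    unfolding S0 by blast
  then have "fM X M z = 0" using fM_prop[OF zM(2)] by blast
  then show False using s(2) zM(1) by (simp add: w_def)
qed

lemma dir1:
  fixes X :: "'a topology"
  assumes Kc: "Ktheta_compact X TYPE('a set set option)"
  shows "w_compact X"
  unfolding w_compact_def
proof (intro allI impI)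
  fix F :: "'a set set"
  assume F: "F \<noteq> {} \<and> (\<forall>P\<in>F. tau_open X P) \<and> finite_intersection_property F"
  show "(\<Inter>P\<in>F. X closure_of P) \<noteq> {}"
  proof
    assume empty: "(\<Inter>P\<in>F. X closure_of P) = {}"
    define S0 where "S0 = {(z, Some M) | z M. validM X M \<and> z \<in> topspace X \<and> z \<in> \<Inter>M}"
    have sS: "S0 \<subseteq> topspace (prod_topology X (YT X F))"
      unfolding S0_def by (auto simp: topspace_YT Ypts_def)
    have eq: "snd ` Ktheta (prod_topology X (YT X F)) S0 = Ktheta (YT X F) (snd ` S0)"
      using Kc sS unfolding Ktheta_compact_def by blast
    have "None \<in> Ktheta (YT X F) (snd ` S0)"
      using dir1_A[of F X S0] F S0_def by blast
    then have "None \<in> snd ` Ktheta (prod_topology X (YT X F)) S0" using eq by simp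
    then obtain p where p: "None = snd p" "p \<in> Ktheta (prod_topology X (YT X F)) S0"
      by (rule imageE)
    then have "(fst p, None) \<in> Ktheta (prod_topology X (YT X F)) S0"
      by (metis prod.collapse)
    then show False using dir1_B[OF empty S0_def] by blast
  qed
qed


theorem theorem3p1:
  fixes X :: "'a topology"
  shows "(Ktheta_compact X TYPE('a set set option) \<longrightarrow> w_compact X)
       \<and> (w_compact X \<longrightarrow> Ktheta_compact X TYPE('b))"
  using dir1[of X] dir2[of X] by blast

end
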